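(* Let $k_1,k_2\in 2\mathbf{Z}_{\geq 0}$ be even positive integers, and let $G=(V,E)$ be an undirected graph with edge capacities $u_e\in\mathbf{Z}_{\geq 0}$, sources $s_1,s_2$ and sinks $t_1,t_2$. Assume $2c_{k_1,k_2}(G)=c_{k_1/2,k_2/2}(G)$. Then an optimal solution of the maximum $k_1,k_2$-splittable totally uniform flow problem on $G$ is obtained by the following construction applied with $\bar k_1=k_1/2$, $\bar k_2=k_2/2$: let $x=c_{\bar k_1,\bar k_2}(G)$, form the auxiliary graph on $V,E$ with capacities $u'_e=\lfloor u_e/x\rfloor$, compute a half-integral two-commodity flow in it with demands $d_1=\bar k_1$, $d_2=\bar k_2$ (which exists by Hu's two-commodity flow theorem), decompose it into $2\bar k_1=k_1$ paths for commodity 1 and $2\bar k_2=k_2$ paths for commodity 2 each carrying flow $1/2$, and assign each of these paths flow $x/2$ in $G$. The resulting $k_1,k_2$-splittable totally uniform flow, with flow $\tfrac12 c_{k_1/2,k_2/2}(G)$ per path, is maximum.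
   Context: A $k_1,k_2$-splittable flow is a two-commodity flow respecting edge capacities using $k_1$ $s_1$--$t_1$-paths for commodity 1 and $k_2$ $s_2$--$t_2$-paths for commodity 2 (paths may repeat); it is totally uniform if all paths of all commodities carry the same flow value. For $S\subseteq V$, $\mathrm{dem}(S)$ is $k_1$ if $S$ separates $s_1$ from $t_1$ only, $k_2$ if it separates $s_2$ from $t_2$ only, $k_1+k_2$ if it separates both pairs, and $0$ otherwise. $c_{k_1,k_2}(S)$ is the maximum $x\ge 0$ such that there exist integers $n(e)\ge 0$ for $e\in\delta(S)$ with $n(e)x\le u_e$ and $\sum_{e\in\delta(S)} n(e)\ge \mathrm{dem}(S)$, and $c_{k_1,k_2}(G)=\min\{c_{k_1,k_2}(S): S\subseteq V,\ \mathrm{dem}(S)\neq 0\}$. The per-path flow of any $k_1,k_2$-splittable totally uniform flow is at most $c_{k_1,k_2}(G)$, and always $2c_{k_1,k_2}(G)\ge c_{k_1/2,k_2/2}(G)$. *)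

theory Defs
  imports Complex_Main
begin

text \<open>An undirected (multi)graph: finite vertex set V, finite edge set E, and a map
  ends assigning to each edge its two endpoints (orientation irrelevant).\<close>

definition graph :: "'v set \<Rightarrow> 'e set \<Rightarrow> ('e \<Rightarrow> 'v \<times> 'v) \<Rightarrow> bool" where
  "graph V E ends \<longleftrightarrow> finite V \<and> finite E \<and>
     (\<forall>e\<in>E. fst (ends e) \<in> V \<and> snd (ends e) \<in> V)"

definition is_path :: "'v set \<Rightarrow> 'e set \<Rightarrow> ('e \<Rightarrow> 'v \<times> 'v) \<Rightarrow> 'v \<Rightarrow> 'v
    \<Rightarrow> 'v list \<times> 'e list \<Rightarrow> bool" where
  "is_path V E ends s t p \<longleftrightarrow>
     (let vs = fst p; es = snd p in
       vs \<noteq> [] \<and> hd vs = s \<and> last vs = t \<and> distinct vs \<and> set vs \<subseteq> V \<and>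
       length vs = length es + 1 \<and>
       (\<forall>i<length es. es ! i \<in> E \<and>
          (ends (es ! i) = (vs ! i, vs ! Suc i) \<or> ends (es ! i) = (vs ! Suc i, vs ! i))))"

definition load :: "('v list \<times> 'e list) list \<Rightarrow> 'e \<Rightarrow> nat" where
  "load Ps e = length (filter (\<lambda>p. e \<in> set (snd p)) Ps)"

definition path_families ::
  "'v set \<Rightarrow> 'e set \<Rightarrow> ('e \<Rightarrow> 'v \<times> 'v) \<Rightarrow> 'v \<Rightarrow> 'v \<Rightarrow> 'v \<Rightarrow> 'v \<Rightarrow> nat \<Rightarrow> nat
     \<Rightarrow> ('v list \<times> 'e list) list \<Rightarrow> ('v list \<times> 'e list) list \<Rightarrow> bool" where
  "path_families V E ends s1 t1 s2 t2 k1 k2 P1 P2 \<longleftrightarrow>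
     length P1 = k1 \<and> length P2 = k2 \<and>
     (\<forall>p\<in>set P1. is_path V E ends s1 t1 p) \<and> (\<forall>p\<in>set P2. is_path V E ends s2 t2 p)"

text \<open>Set of per-path flow values f of k1,k2-splittable totally uniform flows respecting
  the edge capacities u.\<close>

definition tu_values ::
  "'v set \<Rightarrow> 'e set \<Rightarrow> ('e \<Rightarrow> 'v \<times> 'v) \<Rightarrow> ('e \<Rightarrow> nat) \<Rightarrow> 'v \<Rightarrow> 'v \<Rightarrow> 'v \<Rightarrow> 'v
     \<Rightarrow> nat \<Rightarrow> nat \<Rightarrow> real set" where
  "tu_values V E ends u s1 t1 s2 t2 k1 k2 =
     {f. f \<ge> 0 \<and> (\<exists>P1 P2. path_families V E ends s1 t1 s2 t2 k1 k2 P1 P2 \<and>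
            (\<forall>e\<in>E. f * real (load (P1 @ P2) e) \<le> real (u e)))}"

definition cut_edges :: "'e set \<Rightarrow> ('e \<Rightarrow> 'v \<times> 'v) \<Rightarrow> 'v set \<Rightarrow> 'e set" where
  "cut_edges E ends S = {e\<in>E. (fst (ends e) \<in> S) \<noteq> (snd (ends e) \<in> S)}"

definition separates :: "'v set \<Rightarrow> 'v \<Rightarrow> 'v \<Rightarrow> bool" where
  "separates S s t \<longleftrightarrow> (s \<in> S) \<noteq> (t \<in> S)"

definition dem :: "'v \<Rightarrow> 'v \<Rightarrow> 'v \<Rightarrow> 'v \<Rightarrow> nat \<Rightarrow> nat \<Rightarrow> 'v set \<Rightarrow> nat" where
  "dem s1 t1 s2 t2 k1 k2 S =
     (if separates S s1 t1 then k1 else 0) + (if separates S s2 t2 then k2 else 0)"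

definition cap_cut ::
  "'e set \<Rightarrow> ('e \<Rightarrow> 'v \<times> 'v) \<Rightarrow> ('e \<Rightarrow> nat) \<Rightarrow> 'v \<Rightarrow> 'v \<Rightarrow> 'v \<Rightarrow> 'v
     \<Rightarrow> nat \<Rightarrow> nat \<Rightarrow> 'v set \<Rightarrow> real" where
  "cap_cut E ends u s1 t1 s2 t2 k1 k2 S =
     Sup {x::real. x \<ge> 0 \<and> (\<exists>n::'e \<Rightarrow> nat.
            (\<forall>e\<in>cut_edges E ends S. real (n e) * x \<le> real (u e)) \<and>
            (\<Sum>e\<in>cut_edges E ends S. n e) \<ge> dem s1 t1 s2 t2 k1 k2 S)}"

definition cap_graph ::
  "'v set \<Rightarrow> 'e set \<Rightarrow> ('e \<Rightarrow> 'v \<times> 'v) \<Rightarrow> ('e \<Rightarrow> nat) \<Rightarrow> 'v \<Rightarrow> 'v \<Rightarrow> 'v \<Rightarrow> 'v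
     \<Rightarrow> nat \<Rightarrow> nat \<Rightarrow> real" where
  "cap_graph V E ends u s1 t1 s2 t2 k1 k2 =
     Min ((cap_cut E ends u s1 t1 s2 t2 k1 k2) `
          {S. S \<subseteq> V \<and> dem s1 t1 s2 t2 k1 k2 S \<noteq> 0})"

end

theory Submission
  imports Defs
begin


definition sp :: "('v \<Rightarrow> 'e \<Rightarrow> 'v \<Rightarrow> bool) \<Rightarrow> 'v \<Rightarrow> 'v \<Rightarrow> 'v list \<Rightarrow> 'e list \<Rightarrow> bool" where
"sp st s t vs es \<longleftrightarrow> vs \<noteq> [] \<and> hd vs = s \<and> last vs = t \<and> distinct vs \<and> length vs = length es + 1 \<and>
   (\<forall>i<length es. st (vs!i) (es!i) (vs!Suc i))"

lemma reach_sp: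
  assumes "(\<lambda>a b. \<exists>e. st a e b)\<^sup>*\<^sup>* s t"
  shows "\<exists>vs es. sp st s t vs es"
  using assms
proof (induction rule: rtranclp_induct)
  case base
  show ?case by (rule exI[of _ "[s]"], rule exI[of _ "[]"]) (simp add: sp_def)
next
  case (step a b)
  then obtain vs es where p: "sp st s a vs es" by blast
  from step obtain e where e: "st a e b" by blast
  show ?case
  proof (cases "b \<in> set vs")
    case True
    then obtain i where i: "i < length vs" "vs!i = b" by (auto simp: in_set_conv_nth)
    have "sp st s b (take (Suc i) vs) (take i es)"
      using p i unfolding sp_def
      by (auto simp: hd_conv_nth last_conv_nth min_def)
        (metis le_antisym less_Suc_eq_le)
    then show ?thesis by blast
  next
    case False
    have "sp st s b (vs @ [b]) (es @ [e])"
      using p False e unfolding sp_def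
      apply (auto simp: nth_append last_conv_nth)
      apply (metis less_antisym nth_append_length)
      done
    then show ?thesis by blast
  qed
qed

definition adj :: "'e set \<Rightarrow> ('e \<Rightarrow> 'v \<times> 'v) \<Rightarrow> 'v \<Rightarrow> 'e \<Rightarrow> 'v \<Rightarrow> bool" where
  "adj E ends a e b \<longleftrightarrow> e \<in> E \<and> (ends e = (a,b) \<or> ends e = (b,a))"

definition exc :: "'e set \<Rightarrow> ('e \<Rightarrow> 'v \<times> 'v) \<Rightarrow> ('e \<Rightarrow> int) \<Rightarrow> 'v \<Rightarrow> int" where
  "exc E ends f v = (\<Sum>e\<in>E. f e * (of_bool (fst (ends e) = v) - of_bool (snd (ends e) = v)))"

definition dirv :: "('e \<Rightarrow> 'v \<times> 'v) \<Rightarrow> 'e \<Rightarrow> 'v \<Rightarrow> 'v \<Rightarrow> int" where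
  "dirv ends e a b = (if ends e = (a,b) then 1 else -1)"

definition pf :: "('e \<Rightarrow> 'v \<times> 'v) \<Rightarrow> 'v list \<Rightarrow> 'e list \<Rightarrow> 'e \<Rightarrow> int" where
  "pf ends vs es e = (\<Sum>i<length es. if es!i = e then dirv ends e (vs!i) (vs!Suc i) else 0)"

lemma sp_is_path:
  assumes G: "graph V E ends" and s: "s \<in> V"
    and st: "\<And>a e b. st a e b \<Longrightarrow> adj E ends a e b"
    and p: "sp st s t vs es"
  shows "is_path V E ends s t (vs, es)"
proof -
  have len: "length vs = length es + 1" and steps: "\<forall>i<length es. st (vs!i) (es!i) (vs!Suc i)"
    and h: "vs \<noteq> []" "hd vs = s" using p by (auto simp: sp_def)
  have "vs ! i \<in> V" if "i < length vs" for i
    using that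
  proof (induction i)
    case 0
    then show ?case using h s by (simp add: hd_conv_nth)
  next
    case (Suc i)
    then have "adj E ends (vs!i) (es!i) (vs!Suc i)" using steps st len by auto
    then show ?case using G unfolding adj_def graph_def by (metis fst_conv snd_conv)
  qed
  then have "set vs \<subseteq> V" by (auto simp: in_set_conv_nth)
  then show ?thesis using p st unfolding is_path_def sp_def adj_def Let_def by auto
qed

lemma distinct_es:
  assumes "distinct vs" "length vs = length es + 1"
    and "\<forall>i<length es. adj E ends (vs!i) (es!i) (vs!Suc i)"
  shows "distinct es"
proof -
  have "i = j" if "i < length es" "j < length es" "es!i = es!j" "i < j" for i j
  proof -
    have a: "adj E ends (vs!i) (es!i) (vs!Suc i)" "adj E ends (vs!j) (es!j) (vs!Suc j)"
      using assms that by (metis less_trans)+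
    then have "vs!i = vs!j \<or> vs!i = vs!Suc j" using that unfolding adj_def by auto
    moreover have "vs!i \<noteq> vs!j" "vs!i \<noteq> vs!Suc j"
      using assms that by (auto simp: nth_eq_iff_index_eq)
    ultimately show ?thesis by blast
  qed
  then show ?thesis unfolding distinct_conv_nth by (metis linorder_neqE_nat)
qed

lemma dirv_step:
  assumes "adj E ends a e b"
  shows "dirv ends e a b * (of_bool (fst (ends e) = v) - of_bool (snd (ends e) = v))
     = of_bool (a = v) - of_bool (b = v)"
  using assms by (cases "ends e") (auto simp: dirv_def adj_def)

lemma exc_pf:
  assumes fin: "finite E" and "length vs = length es + 1"
    and steps: "\<forall>i<length es. adj E ends (vs!i) (es!i) (vs!Suc i)"
  shows "exc E ends (pf ends vs es) v = of_bool (vs!0 = v) - of_bool (vs!(length es) = v)"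
proof -
  let ?w = "\<lambda>e. (of_bool (fst (ends e) = v) - of_bool (snd (ends e) = v)) :: int"
  have "exc E ends (pf ends vs es) v =
      (\<Sum>e\<in>E. \<Sum>i<length es. if es!i = e then dirv ends e (vs!i) (vs!Suc i) * ?w e else 0)"
    unfolding exc_def pf_def sum_distrib_right by (intro sum.cong refl) (auto intro!: sum.cong)
  also have "\<dots> = (\<Sum>i<length es. \<Sum>e\<in>E. if es!i = e then dirv ends e (vs!i) (vs!Suc i) * ?w e else 0)"
    by (rule sum.swap)
  also have "\<dots> = (\<Sum>i<length es. dirv ends (es!i) (vs!i) (vs!Suc i) * ?w (es!i))"
  proof (intro sum.cong refl)
    fix i assume "i \<in> {..<length es}"
    then have "es!i \<in> E" using steps by (auto simp: adj_def)
    then show "(\<Sum>e\<in>E. if es!i = e then dirv ends e (vs!i) (vs!Suc i) * ?w e else 0)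
       = dirv ends (es!i) (vs!i) (vs!Suc i) * ?w (es!i)"
      using fin by (simp only: sum.delta' if_True)
  qed
  also have "\<dots> = (\<Sum>i<length es. of_bool (vs!i = v) - of_bool (vs!Suc i = v))"
    using steps by (intro sum.cong refl dirv_step) auto
  also have "\<dots> = of_bool (vs!0 = v) - of_bool (vs!(length es) = v)"
    by (rule sum_lessThan_telescope')
  finally show ?thesis .
qed

lemma exc_add: "exc E ends (\<lambda>e. f e + g e) v = exc E ends f v + exc E ends g v"
  unfolding exc_def distrib_right sum.distrib ..

lemma exc_diff: "exc E ends (\<lambda>e. f e - g e) v = exc E ends f v - exc E ends g v"
  unfolding exc_def left_diff_distrib sum_subtractf ..

lemma pf_in:
  assumes "distinct es" "i < length es"
  shows "pf ends vs es (es!i) = dirv ends (es!i) (vs!i) (vs!Suc i)"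
proof -
  have "pf ends vs es (es!i) = (\<Sum>j<length es. if j = i then dirv ends (es!i) (vs!j) (vs!Suc j) else 0)"
    unfolding pf_def using assms by (intro sum.cong refl) (auto simp: nth_eq_iff_index_eq)
  also have "\<dots> = dirv ends (es!i) (vs!i) (vs!Suc i)" using assms by (simp add: sum.delta')
  finally show ?thesis .
qed

lemma pf_notin: "e \<notin> set es \<Longrightarrow> pf ends vs es e = 0"
  unfolding pf_def by (intro sum.neutral) (auto simp: in_set_conv_nth)

lemma sum_of_bool_eq: "finite R \<Longrightarrow> (\<Sum>v\<in>R. of_bool (a = v) :: int) = of_bool (a \<in> R)"
  unfolding of_bool_def by (simp add: sum.delta)

lemma sum_exc:
  assumes "finite E" "finite R"
  shows "(\<Sum>v\<in>R. exc E ends f v) =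
     (\<Sum>e\<in>E. f e * (of_bool (fst (ends e) \<in> R) - of_bool (snd (ends e) \<in> R)))"
proof -
  have "(\<Sum>v\<in>R. exc E ends f v) =
      (\<Sum>e\<in>E. \<Sum>v\<in>R. f e * (of_bool (fst (ends e) = v) - of_bool (snd (ends e) = v)))"
    unfolding exc_def by (rule sum.swap)
  also have "\<dots> = (\<Sum>e\<in>E. f e * (of_bool (fst (ends e) \<in> R) - of_bool (snd (ends e) \<in> R)))"
    using assms by (intro sum.cong refl)
       (simp only: sum_distrib_left[symmetric] sum_subtractf sum_of_bool_eq)
  finally show ?thesis .
qed

lemma reach_in_V:
  assumes G: "graph V E ends" and v0: "v0 \<in> V"
    and st: "\<And>a e b. st a e b \<Longrightarrow> adj E ends a e b"
    and r: "(\<lambda>a b. \<exists>e. st a e b)\<^sup>*\<^sup>* v0 w"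
  shows "w \<in> V"
  using r
proof (induction rule: rtranclp_induct)
  case base then show ?case using v0 .
next
  case (step y z)
  then obtain e where "adj E ends y e z" using st by blast
  then show ?case using G unfolding adj_def graph_def by (metis fst_conv snd_conv)
qed




lemma flow_exists:
  fixes c :: "'e \<Rightarrow> nat" and b :: "'v \<Rightarrow> int"
  assumes G: "graph V E ends"
    and bsum: "(\<Sum>v\<in>V. b v) = 0"
    and cutc: "\<And>S. S \<subseteq> V \<Longrightarrow> (\<Sum>v\<in>S. b v) \<le> (\<Sum>e\<in>cut_edges E ends S. int (c e))"
  shows "\<exists>f. (\<forall>e\<in>E. \<bar>f e\<bar> \<le> int (c e)) \<and> (\<forall>v\<in>V. exc E ends f v = b v)"
proof -
  define feas where "feas f \<longleftrightarrow> (\<forall>e\<in>E. \<bar>f e\<bar> \<le> int (c e))" for f :: "'e \<Rightarrow> int"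
  define M where "M f = nat (\<Sum>v\<in>V. \<bar>b v - exc E ends f v\<bar>)" for f
  have "feas (\<lambda>_. 0)" by (simp add: feas_def)
  from ex_has_least_nat[of feas, OF this, of M] obtain f
    where f: "feas f" "\<And>g. feas g \<Longrightarrow> M f \<le> M g" by blast
  have finV: "finite V" and finE: "finite E" and endsV: "\<And>e. e \<in> E \<Longrightarrow> fst (ends e) \<in> V \<and> snd (ends e) \<in> V"
    using G by (auto simp: graph_def)
  show ?thesis
  proof (rule ccontr)
    assume nex: "\<not> ?thesis"
    then obtain w0 where w0: "w0 \<in> V" "exc E ends f w0 \<noteq> b w0" using f(1) feas_def by blast
    have "(\<Sum>v\<in>V. exc E ends f v) = 0"
      using sum_exc[OF finE finV, of ends f] endsV by (simp add: sum.neutral)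
    then have s0: "(\<Sum>v\<in>V. exc E ends f v - b v) = 0" using bsum by (simp add: sum_subtractf)
    have "\<exists>v\<in>V. b v - exc E ends f v > 0"
    proof (rule ccontr)
      assume "\<not> ?thesis"
      then have "\<forall>v\<in>V. exc E ends f v - b v \<ge> 0" by (auto simp: not_less)
      then have "\<forall>v\<in>V. exc E ends f v - b v = 0" using sum_nonneg_eq_0_iff[OF finV, of "\<lambda>v. exc E ends f v - b v"] s0 by blast
      then show False using w0 by (metis eq_iff_diff_eq_0)
    qed
    then obtain v0 where v0: "v0 \<in> V" "b v0 - exc E ends f v0 > 0" by blast
    define st where "st a e b' \<longleftrightarrow> e \<in> E \<and> (if ends e = (a,b') then f e < int (c e)
        else ends e = (b',a) \<and> - f e < int (c e))" for a e b'
    have stadj: "\<And>a e b'. st a e b' \<Longrightarrow> adj E ends a e b'"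
      by (auto simp: st_def adj_def split: if_splits)
    define R where "R = {w. (\<lambda>a b'. \<exists>e. st a e b')\<^sup>*\<^sup>* v0 w}"
    have RV: "R \<subseteq> V" using reach_in_V[OF G v0(1) stadj] by (auto simp: R_def)
    show False
    proof (cases "\<exists>w\<in>R. b w - exc E ends f w < 0")
      case True
      then obtain w where w: "w \<in> R" "b w - exc E ends f w < 0" by blast
      then obtain vs es where p: "sp st v0 w vs es" using reach_sp[of st v0 w] unfolding R_def by blast
      have len: "length vs = length es + 1" and steps: "\<forall>i<length es. st (vs!i) (es!i) (vs!Suc i)"
        and h: "vs!0 = v0" "vs!(length es) = w"
        using p by (auto simp: sp_def hd_conv_nth last_conv_nth)
      have adjs: "\<forall>i<length es. adj E ends (vs!i) (es!i) (vs!Suc i)" using steps stadj by blast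
      have des: "distinct es" using distinct_es[OF _ len adjs] p by (auto simp: sp_def)
      define g where "g e = f e + pf ends vs es e" for e
      have "feas g" unfolding feas_def
      proof
        fix e assume eE: "e \<in> E"
        show "\<bar>g e\<bar> \<le> int (c e)"
        proof (cases "e \<in> set es")
          case True
          then obtain i where i: "i < length es" "e = es!i" by (auto simp: in_set_conv_nth)
          have "st (vs!i) e (vs!Suc i)" using steps i by auto
          moreover have "pf ends vs es e = dirv ends e (vs!i) (vs!Suc i)" using pf_in[OF des i(1)] i by simp
          ultimately show ?thesis using f(1) eE unfolding g_def feas_def st_def dirv_def
            by (auto split: if_splits)
        next
          case False
          then show ?thesis using f(1) eE by (simp add: g_def pf_notin feas_def)
        qed
      qed
      have excg: "exc E ends g v = exc E ends f v + (of_bool (v0 = v) - of_bool (w = v))" for v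
        unfolding g_def exc_add exc_pf[OF finE len adjs] h ..
      have "v0 \<noteq> w" using v0 w by auto
      have wV: "w \<in> V" using w RV by auto
      let ?D = "\<lambda>v. b v - exc E ends f v"
      have pt: "\<bar>?D v\<bar> = \<bar>b v - exc E ends g v\<bar> + of_bool (v = v0) + of_bool (v = w)" for v
        using v0 w \<open>v0 \<noteq> w\<close> unfolding excg by auto
      have "(\<Sum>v\<in>V. \<bar>?D v\<bar>) = (\<Sum>v\<in>V. \<bar>b v - exc E ends g v\<bar>) + 1 + 1"
        unfolding pt sum.distrib using finV v0(1) wV
        by (simp add: sum_of_bool_eq[symmetric] eq_commute[of _ v0] eq_commute[of _ w])
      moreover have "0 \<le> (\<Sum>v\<in>V. \<bar>b v - exc E ends g v\<bar>)" by (simp add: sum_nonneg)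
      ultimately have "M g < M f" unfolding M_def zless_nat_conj by linarith
      then show False using f(2)[OF \<open>feas g\<close>] by simp
    next
      case False
      have v0R: "v0 \<in> R" by (simp add: R_def)
      have finR: "finite R" using RV finV finite_subset by blast
      have lt: "(\<Sum>v\<in>R. exc E ends f v) < (\<Sum>v\<in>R. b v)"
        using False v0 v0R finR by (intro sum_strict_mono_ex1) (auto simp: not_less)
      have trm: "f e * (of_bool (fst (ends e) \<in> R) - of_bool (snd (ends e) \<in> R)) =
          (if e \<in> cut_edges E ends R then int (c e) else 0)" if eE: "e \<in> E" for e
      proof (cases "e \<in> cut_edges E ends R")
        case True
        obtain a b' where ab: "ends e = (a, b')" by (cases "ends e")
        show ?thesis
        proof (cases "a \<in> R")
          case aR: True
          then have "b' \<notin> R" using True ab by (auto simp: cut_edges_def)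
          then have "\<not> st a e b'" using aR unfolding R_def
            by (auto intro: rtranclp.rtrancl_into_rtrancl)
          then have "f e = int (c e)" using f(1) eE ab unfolding st_def feas_def by force
          then show ?thesis using True ab aR \<open>b' \<notin> R\<close> by simp
        next
          case aR: False
          then have bR: "b' \<in> R" using True ab by (auto simp: cut_edges_def)
          then have "\<not> st b' e a" using aR unfolding R_def
            by (auto intro: rtranclp.rtrancl_into_rtrancl)
          moreover have "a \<noteq> b'" using aR bR by auto
          ultimately have "f e = - int (c e)" using f(1) eE ab unfolding st_def feas_def by force
          then show ?thesis using True ab aR bR by simp
        qed
      next
        case False
        then show ?thesis using eE by (auto simp: cut_edges_def)
      qed
      have "(\<Sum>v\<in>R. exc E ends f v) = (\<Sum>e\<in>E. if e \<in> cut_edges E ends R then int (c e) else 0)"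
        unfolding sum_exc[OF finE finR] using trm by (rule sum.cong[OF refl])
      also have "\<dots> = (\<Sum>e\<in>cut_edges E ends R. int (c e))"
        using finE by (simp add: sum.If_cases cut_edges_def Int_def conj_commute)
      finally show False using lt cutc[OF RV] by simp
    qed
  qed
qed




lemma load_Cons: "load (p # P) e = (if e \<in> set (snd p) then Suc (load P e) else load P e)"
  by (simp add: load_def)

lemma load_Nil: "load [] e = 0" by (simp add: load_def)

lemma load_append: "load (P @ Q) e = load P e + load Q e" by (simp add: load_def)

lemma decomp:
  assumes G: "graph V E ends" and sV: "s \<in> V" and tV: "t \<in> V" and st_ne: "s \<noteq> t"
  shows "(\<forall>v\<in>V. exc E ends f v = (if v = s then int d else if v = t then - int d else 0)) \<Longrightarrow>
    \<exists>P. length P = d \<and> (\<forall>p\<in>set P. is_path V E ends s t p) \<and> (\<forall>e\<in>E. int (load P e) \<le> \<bar>f e\<bar>)"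
proof (induction d arbitrary: f)
  case 0
  show ?case by (rule exI[of _ "[]"]) (simp add: load_Nil)
next
  case (Suc d)
  note exf = Suc.prems
  have finV: "finite V" and finE: "finite E"
    using G by (auto simp: graph_def)
  define st where "st a e b' \<longleftrightarrow> e \<in> E \<and> (if ends e = (a,b') then f e > 0
        else ends e = (b',a) \<and> f e < 0)" for a e b'
  have stadj: "\<And>a e b'. st a e b' \<Longrightarrow> adj E ends a e b'"
    by (auto simp: st_def adj_def split: if_splits)
  define R where "R = {w. (\<lambda>a b'. \<exists>e. st a e b')\<^sup>*\<^sup>* s w}"
  have RV: "R \<subseteq> V" using reach_in_V[OF G sV stadj] by (auto simp: R_def)
  have sR: "s \<in> R" by (simp add: R_def)
  have finR: "finite R" using RV finV finite_subset by blast
  have tR: "t \<in> R"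
  proof (rule ccontr)
    assume tR: "t \<notin> R"
    have "(\<Sum>v\<in>R. exc E ends f v) = (\<Sum>v\<in>R. if v = s then int (Suc d) else 0)"
      using exf RV tR by (intro sum.cong refl) auto
    also have "\<dots> = int (Suc d)" using finR sR by (simp add: sum.delta')
    finally have pos: "(\<Sum>v\<in>R. exc E ends f v) = int (Suc d)" .
    have "f e * (of_bool (fst (ends e) \<in> R) - of_bool (snd (ends e) \<in> R)) \<le> 0" if eE: "e \<in> E" for e
    proof -
      obtain a b' where ab: "ends e = (a, b')" by (cases "ends e")
      consider "a \<in> R" "b' \<notin> R" | "a \<notin> R" "b' \<in> R" | "(a \<in> R) = (b' \<in> R)" by blast
      then show ?thesis
      proof cases
        case 1
        then have "\<not> st a e b'" unfolding R_def
          by (metis (mono_tags, lifting) mem_Collect_eq rtranclp.rtrancl_into_rtrancl)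
        then have "f e \<le> 0" using eE ab unfolding st_def by auto
        then show ?thesis using 1 ab by simp
      next
        case 2
        then have "\<not> st b' e a" unfolding R_def
          by (metis (mono_tags, lifting) mem_Collect_eq rtranclp.rtrancl_into_rtrancl)
        moreover have "a \<noteq> b'" using 2 by auto
        ultimately have "f e \<ge> 0" using eE ab unfolding st_def by auto
        then show ?thesis using 2 ab by simp
      next
        case 3
        then show ?thesis using ab by auto
      qed
    qed
    then have "(\<Sum>v\<in>R. exc E ends f v) \<le> 0"
      unfolding sum_exc[OF finE finR] by (intro sum_nonpos) auto
    then show False using pos by simp
  qed
  then obtain vs es where p: "sp st s t vs es" using reach_sp[of st s t] unfolding R_def by blast
  have len: "length vs = length es + 1" and steps: "\<forall>i<length es. st (vs!i) (es!i) (vs!Suc i)"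
    and h: "vs!0 = s" "vs!(length es) = t"
    using p by (auto simp: sp_def hd_conv_nth last_conv_nth)
  have adjs: "\<forall>i<length es. adj E ends (vs!i) (es!i) (vs!Suc i)" using steps stadj by blast
  have des: "distinct es" using distinct_es[OF _ len adjs] p by (auto simp: sp_def)
  have ip: "is_path V E ends s t (vs, es)" using sp_is_path[OF G sV stadj p] .
  define g where "g e = f e - pf ends vs es e" for e
  have "\<forall>v\<in>V. exc E ends g v = (if v = s then int d else if v = t then - int d else 0)"
  proof
    fix v assume "v \<in> V"
    then show "exc E ends g v = (if v = s then int d else if v = t then - int d else 0)"
      unfolding g_def exc_diff exc_pf[OF finE len adjs] h using exf st_ne by auto
  qed
  from Suc.IH[OF this] obtain P where P: "length P = d" "\<forall>p\<in>set P. is_path V E ends s t p"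
    "\<forall>e\<in>E. int (load P e) \<le> \<bar>g e\<bar>" by blast
  have "\<forall>e\<in>E. int (load ((vs, es) # P) e) \<le> \<bar>f e\<bar>"
  proof
    fix e assume eE: "e \<in> E"
    show "int (load ((vs, es) # P) e) \<le> \<bar>f e\<bar>"
    proof (cases "e \<in> set es")
      case True
      then obtain i where i: "i < length es" "e = es!i" by (auto simp: in_set_conv_nth)
      have "st (vs!i) e (vs!Suc i)" using steps i by auto
      moreover have "pf ends vs es e = dirv ends e (vs!i) (vs!Suc i)" using pf_in[OF des i(1)] i by simp
      moreover have "int (load P e) \<le> \<bar>f e - pf ends vs es e\<bar>" using P(3) eE by (simp add: g_def)
      ultimately show ?thesis using True unfolding load_Cons st_def dirv_def
        by (auto split: if_splits)
    next
      case False
      then show ?thesis using P(3)[rule_format, OF eE] pf_notin[OF False, of ends vs] by (simp add: g_def load_Cons)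
    qed
  qed
  then show ?case using P ip by (intro exI[of _ "(vs, es) # P"]) auto
qed




lemma crossing:
  assumes p: "is_path V E ends s t (vs, es)" and sep: "separates S s t"
  shows "\<exists>i<length es. es!i \<in> cut_edges E ends S"
proof (rule ccontr)
  assume nc: "\<not> ?thesis"
  have len: "length vs = length es + 1" and h: "vs!0 = s" "vs!(length es) = t"
    and steps: "\<forall>i<length es. es!i \<in> E \<and> (ends (es!i) = (vs!i, vs!Suc i) \<or> ends (es!i) = (vs!Suc i, vs!i))"
    using p by (auto simp: is_path_def Let_def hd_conv_nth last_conv_nth)
  have "i \<le> length es \<Longrightarrow> (vs!i \<in> S) = (s \<in> S)" for i
  proof (induction i)
    case 0 then show ?case using h by simp
  next
    case (Suc i)
    then have "i < length es" by simp
    then have "es!i \<notin> cut_edges E ends S" "es!i \<in> E"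
      "ends (es!i) = (vs!i, vs!Suc i) \<or> ends (es!i) = (vs!Suc i, vs!i)"
      using nc steps by auto
    then have "(vs!i \<in> S) = (vs!Suc i \<in> S)" unfolding cut_edges_def by auto
    then show ?case using Suc by simp
  qed
  from this[of "length es"] show False using h sep by (simp add: separates_def)
qed

lemma paths_cut:
  assumes "finite E" "separates S s t"
  shows "(\<forall>p\<in>set P. is_path V E ends s t p) \<Longrightarrow> length P \<le> (\<Sum>e\<in>cut_edges E ends S. load P e)"
proof (induction P)
  case Nil then show ?case by simp
next
  case (Cons p P)
  obtain vs es where pe: "p = (vs, es)" by (cases p)
  have ip: "is_path V E ends s t (vs, es)" using Cons.prems pe by auto
  obtain i where i: "i < length es" "es!i \<in> cut_edges E ends S" using crossing[OF ip assms(2)] by blast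
  have finC: "finite (cut_edges E ends S)" using assms(1) by (simp add: cut_edges_def)
  have "(1::nat) \<le> (\<Sum>e\<in>cut_edges E ends S. if e \<in> set es then 1 else 0)"
    using member_le_sum[OF _ _ finC, of "es!i" "\<lambda>e. if e \<in> set es then 1 else 0::nat"] i
    by simp
  moreover have "(\<Sum>e\<in>cut_edges E ends S. load (p # P) e) =
      (\<Sum>e\<in>cut_edges E ends S. if e \<in> set es then 1 else 0) + (\<Sum>e\<in>cut_edges E ends S. load P e)"
    unfolding sum.distrib[symmetric] load_Cons pe by (intro sum.cong refl) auto
  ultimately show ?case using Cons by simp
qed

lemma dem_le_load:
  assumes "finite E" "path_families V E ends s1 t1 s2 t2 k1 k2 P1 P2"
  shows "dem s1 t1 s2 t2 k1 k2 S \<le> (\<Sum>e\<in>cut_edges E ends S. load (P1 @ P2) e)"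
proof -
  have a: "(if separates S s1 t1 then k1 else 0) \<le> (\<Sum>e\<in>cut_edges E ends S. load P1 e)"
    using paths_cut[OF assms(1), of S s1 t1 P1 V] assms(2) by (auto simp: path_families_def)
  have b: "(if separates S s2 t2 then k2 else 0) \<le> (\<Sum>e\<in>cut_edges E ends S. load P2 e)"
    using paths_cut[OF assms(1), of S s2 t2 P2 V] assms(2) by (auto simp: path_families_def)
  show ?thesis unfolding dem_def load_append sum.distrib using a b by simp
qed

definition capset :: "'e set \<Rightarrow> ('e \<Rightarrow> nat) \<Rightarrow> nat \<Rightarrow> real set" where
  "capset C u D = {x::real. x \<ge> 0 \<and> (\<exists>n::'e \<Rightarrow> nat.
            (\<forall>e\<in>C. real (n e) * x \<le> real (u e)) \<and> (\<Sum>e\<in>C. n e) \<ge> D)}"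

lemma cap_cut_capset: "cap_cut E ends u s1 t1 s2 t2 k1 k2 S =
   Sup (capset (cut_edges E ends S) u (dem s1 t1 s2 t2 k1 k2 S))"
  unfolding cap_cut_def capset_def ..

lemma capset_ne: "finite C \<Longrightarrow> C \<noteq> {} \<Longrightarrow> 0 \<in> capset C u D"
  unfolding capset_def
proof (intro CollectI conjI exI[of _ "\<lambda>_. D"])
  assume "finite C" "C \<noteq> {}"
  then obtain e where "e \<in> C" by blast
  then show "D \<le> (\<Sum>e\<in>C. D)" using \<open>finite C\<close> member_le_sum[of e C "\<lambda>_. D"] by simp
qed auto

lemma capset_bdd:
  assumes "finite C" "D > 0"
  shows "bdd_above (capset C u D)"
proof (rule bdd_aboveI[of _ "\<Sum>e\<in>C. real (u e)"])
  fix y assume "y \<in> capset C u D"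
  then obtain n where y: "y \<ge> 0" "\<forall>e\<in>C. real (n e) * y \<le> real (u e)" "(\<Sum>e\<in>C. n e) \<ge> D"
    unfolding capset_def by blast
  have "\<exists>e\<in>C. n e \<ge> 1"
  proof (rule ccontr)
    assume "\<not> ?thesis"
    then have "(\<Sum>e\<in>C. n e) = 0" by (simp add: not_le)
    then show False using y(3) assms(2) by simp
  qed
  then obtain e where e: "e \<in> C" "n e \<ge> 1" by blast
  have "y \<le> real (n e) * y" using e(2) y(1) by (simp add: mult_le_cancel_right1)
  also have "\<dots> \<le> real (u e)" using y(2) e(1) by auto
  also have "\<dots> \<le> (\<Sum>e\<in>C. real (u e))" using member_le_sum[OF e(1) _ assms(1), of "\<lambda>e. real (u e)"] by simp
  finally show "y \<le> (\<Sum>e\<in>C. real (u e))" .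
qed

lemma cap_ge:
  assumes finC: "finite C" and Cne: "C \<noteq> {}" and D: "D > 0"
    and x: "x > 0" "x \<le> Sup (capset C u D)"
  shows "D \<le> (\<Sum>e\<in>C. nat \<lfloor>real (u e) / x\<rfloor>)"
proof (rule ccontr)
  assume "\<not> ?thesis"
  then have lt: "(\<Sum>e\<in>C. nat \<lfloor>real (u e) / x\<rfloor>) < D" by simp
  define m where "m e = nat \<lfloor>real (u e) / x\<rfloor>" for e
  have m_int: "real (m e) = of_int \<lfloor>real (u e) / x\<rfloor>" for e
    using x(1) by (simp add: m_def)
  have bnd: "real (u e) / (real (m e) + 1) < x" for e
  proof -
    have "real (u e) / x < real (m e) + 1" unfolding m_int by linarith
    then have "real (u e) < x * (real (m e) + 1)" using x(1) by (simp add: field_simps)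
    then show ?thesis by (simp add: field_simps add_pos_nonneg)
  qed
  define M0 where "M0 = Max ((\<lambda>e. real (u e) / (real (m e) + 1)) ` C)"
  have "M0 < x" unfolding M0_def using finC Cne bnd by (simp add: Max_less_iff)
  then have "M0 < Sup (capset C u D)" using x(2) by simp
  then obtain y where y: "y \<in> capset C u D" "M0 < y"
    using less_cSupD[of "capset C u D"] capset_ne[OF finC Cne] by blast
  then obtain n where n: "\<forall>e\<in>C. real (n e) * y \<le> real (u e)" "(\<Sum>e\<in>C. n e) \<ge> D"
    unfolding capset_def by blast
  have "n e \<le> m e" if eC: "e \<in> C" for e
  proof -
    have "real (u e) / (real (m e) + 1) \<le> M0" unfolding M0_def using finC eC by simp
    then have y1: "real (u e) / (real (m e) + 1) < y" using y(2) by simp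
    have "0 \<le> real (u e) / (real (m e) + 1)" by simp
    then have ypos: "y > 0" using y1 by linarith
    have "real (u e) < y * (real (m e) + 1)" using y1 by (simp add: field_simps add_pos_nonneg)
    moreover have "real (n e) * y \<le> real (u e)" using n(1) eC by auto
    ultimately have "real (n e) * y < (real (m e) + 1) * y" by (simp add: algebra_simps)
    then have "real (n e) < real (m e) + 1" using ypos by simp
    then show ?thesis by simp
  qed
  then have "(\<Sum>e\<in>C. n e) \<le> (\<Sum>e\<in>C. m e)" by (intro sum_mono) auto
  then show False using lt n(2) unfolding m_def by simp
qed




lemma cut_ne:
  assumes conn1: "\<exists>p. is_path V E ends s1 t1 p" and conn2: "\<exists>p. is_path V E ends s2 t2 p"
    and d: "dem s1 t1 s2 t2 a b S \<noteq> 0"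
  shows "cut_edges E ends S \<noteq> {}"
proof -
  have "separates S s1 t1 \<or> separates S s2 t2" using d by (auto simp: dem_def split: if_splits)
  then show ?thesis
  proof
    assume sep: "separates S s1 t1"
    obtain vs es where "is_path V E ends s1 t1 (vs, es)" using conn1 by auto
    from crossing[OF this sep] show ?thesis by auto
  next
    assume sep: "separates S s2 t2"
    obtain vs es where "is_path V E ends s2 t2 (vs, es)" using conn2 by auto
    from crossing[OF this sep] show ?thesis by auto
  qed
qed

lemma cg_facts:
  assumes G: "graph V E ends" and s1: "s1 \<in> V" "s1 \<noteq> t1" and a: "a > 0"
  shows "\<exists>S0. S0 \<subseteq> V \<and> dem s1 t1 s2 t2 a b S0 \<noteq> 0 \<and>
            cap_graph V E ends u s1 t1 s2 t2 a b = cap_cut E ends u s1 t1 s2 t2 a b S0"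
    and "\<And>S. S \<subseteq> V \<Longrightarrow> dem s1 t1 s2 t2 a b S \<noteq> 0 \<Longrightarrow>
            cap_graph V E ends u s1 t1 s2 t2 a b \<le> cap_cut E ends u s1 t1 s2 t2 a b S"
proof -
  let ?I = "{S. S \<subseteq> V \<and> dem s1 t1 s2 t2 a b S \<noteq> 0}"
  have fin: "finite ?I" using G by (auto simp: graph_def intro: finite_subset[of _ "Pow V"])
  have "{s1} \<in> ?I" using s1 a by (auto simp: dem_def separates_def)
  then have ne: "?I \<noteq> {}" by blast
  have "cap_graph V E ends u s1 t1 s2 t2 a b \<in> cap_cut E ends u s1 t1 s2 t2 a b ` ?I"
    unfolding cap_graph_def using fin ne by (intro Min_in) auto
  then show "\<exists>S0. S0 \<subseteq> V \<and> dem s1 t1 s2 t2 a b S0 \<noteq> 0 \<and>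
            cap_graph V E ends u s1 t1 s2 t2 a b = cap_cut E ends u s1 t1 s2 t2 a b S0" by auto
  fix S assume "S \<subseteq> V" "dem s1 t1 s2 t2 a b S \<noteq> 0"
  then show "cap_graph V E ends u s1 t1 s2 t2 a b \<le> cap_cut E ends u s1 t1 s2 t2 a b S"
    unfolding cap_graph_def using fin by (intro Min_le) auto
qed

lemma capcut_nonneg:
  assumes G: "graph V E ends" and conn1: "\<exists>p. is_path V E ends s1 t1 p"
    and conn2: "\<exists>p. is_path V E ends s2 t2 p" and d: "dem s1 t1 s2 t2 a b S \<noteq> 0"
  shows "0 \<le> cap_cut E ends u s1 t1 s2 t2 a b S"
proof -
  have finC: "finite (cut_edges E ends S)" using G by (simp add: graph_def cut_edges_def)
  show ?thesis unfolding cap_cut_capset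
    using cut_ne[OF conn1 conn2 d] finC d
    by (intro cSup_upper capset_ne capset_bdd) auto
qed

lemma sum_of_bool_eq': "finite R \<Longrightarrow> (\<Sum>v\<in>R. of_bool (v = a) :: int) = of_bool (a \<in> R)"
  using sum_of_bool_eq[of R a] by (simp add: eq_commute)

lemma bsum_V:
  fixes d1 d2 :: int
  assumes "finite V" "p \<in> V" "q \<in> V" "r \<in> V" "w \<in> V"
  shows "(\<Sum>v\<in>V. d1 * of_bool (v = p) + d2 * of_bool (v = q) - d1 * of_bool (v = r) - d2 * of_bool (v = w)) = 0"
  using assms by (simp add: sum.distrib sum_subtractf sum_distrib_left[symmetric] sum_of_bool_eq')

lemma bsum_S:
  fixes d1 d2 :: int
  assumes "finite S"
  shows "(\<Sum>v\<in>S. d1 * of_bool (v = p) + d2 * of_bool (v = q) - d1 * of_bool (v = r) - d2 * of_bool (v = w))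
     = d1 * (of_bool (p \<in> S) - of_bool (r \<in> S)) + d2 * (of_bool (q \<in> S) - of_bool (w \<in> S))"
  using assms by (simp add: sum.distrib sum_subtractf sum_distrib_left[symmetric] sum_of_bool_eq' algebra_simps)




lemma hu_paths:
  fixes u :: "'e \<Rightarrow> nat" and x :: real
  assumes G: "graph V E ends"
    and tV: "s1 \<in> V" "t1 \<in> V" "s2 \<in> V" "t2 \<in> V" "s1 \<noteq> t1" "s2 \<noteq> t2"
    and k: "even k1" "even k2" and x: "x > 0"
    and cutc: "\<And>S. S \<subseteq> V \<Longrightarrow> dem s1 t1 s2 t2 (k1 div 2) (k2 div 2) S
                    \<le> (\<Sum>e\<in>cut_edges E ends S. nat \<lfloor>real (u e) / x\<rfloor>)"
  shows "\<exists>P1 P2. path_families V E ends s1 t1 s2 t2 k1 k2 P1 P2 \<and>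
           (\<forall>e\<in>E. real (load (P1 @ P2) e) \<le> 2 * of_int \<lfloor>real (u e) / x\<rfloor>)"
proof -
  have finV: "finite V" and finE: "finite E" using G by (auto simp: graph_def)
  define c where "c e = nat \<lfloor>real (u e) / x\<rfloor>" for e
  have cint: "int (c e) = \<lfloor>real (u e) / x\<rfloor>" for e using x by (simp add: c_def)
  define d1 where "d1 = int (k1 div 2)"
  define d2 where "d2 = int (k2 div 2)"
  have d1k: "int k1 = 2 * d1" and d2k: "int k2 = 2 * d2" using k by (auto simp: d1_def d2_def)
  have d0: "d1 \<ge> 0" "d2 \<ge> 0" by (auto simp: d1_def d2_def)
  define b1 where "b1 v = d1 * of_bool (v = s1) + d2 * of_bool (v = s2) - d1 * of_bool (v = t1) - d2 * of_bool (v = t2)" for v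
  define b2 where "b2 v = d1 * of_bool (v = s1) + d2 * of_bool (v = t2) - d1 * of_bool (v = t1) - d2 * of_bool (v = s2)" for v
  have cutS: "(\<Sum>v\<in>S. b v) \<le> (\<Sum>e\<in>cut_edges E ends S. int (c e))"
    if S: "S \<subseteq> V" and bS: "(\<Sum>v\<in>S. b v) \<le> int (dem s1 t1 s2 t2 (k1 div 2) (k2 div 2) S)" for S b
  proof -
    have "int (dem s1 t1 s2 t2 (k1 div 2) (k2 div 2) S) \<le> int (\<Sum>e\<in>cut_edges E ends S. c e)"
      using cutc[OF S] unfolding c_def by (simp only: of_nat_le_iff)
    then show ?thesis using bS by simp
  qed
  have "\<exists>f. (\<forall>e\<in>E. \<bar>f e\<bar> \<le> int (c e)) \<and> (\<forall>v\<in>V. exc E ends f v = b1 v)"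
  proof (rule flow_exists[OF G])
    show "(\<Sum>v\<in>V. b1 v) = 0" unfolding b1_def using bsum_V[OF finV tV(1,3,2,4)] .
    fix S assume S: "S \<subseteq> V"
    have finS: "finite S" using S finV finite_subset by blast
    show "(\<Sum>v\<in>S. b1 v) \<le> (\<Sum>e\<in>cut_edges E ends S. int (c e))"
    proof (rule cutS[OF S])
      show "(\<Sum>v\<in>S. b1 v) \<le> int (dem s1 t1 s2 t2 (k1 div 2) (k2 div 2) S)"
        unfolding b1_def bsum_S[OF finS] using d0
        by (auto simp: dem_def separates_def d1_def d2_def)
    qed
  qed
  then obtain fx where fx: "\<forall>e\<in>E. \<bar>fx e\<bar> \<le> int (c e)" "\<forall>v\<in>V. exc E ends fx v = b1 v" by blast
  have "\<exists>f. (\<forall>e\<in>E. \<bar>f e\<bar> \<le> int (c e)) \<and> (\<forall>v\<in>V. exc E ends f v = b2 v)"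
  proof (rule flow_exists[OF G])
    show "(\<Sum>v\<in>V. b2 v) = 0" unfolding b2_def using bsum_V[OF finV tV(1,4,2,3)] .
    fix S assume S: "S \<subseteq> V"
    have finS: "finite S" using S finV finite_subset by blast
    show "(\<Sum>v\<in>S. b2 v) \<le> (\<Sum>e\<in>cut_edges E ends S. int (c e))"
    proof (rule cutS[OF S])
      show "(\<Sum>v\<in>S. b2 v) \<le> int (dem s1 t1 s2 t2 (k1 div 2) (k2 div 2) S)"
        unfolding b2_def bsum_S[OF finS] using d0
        by (auto simp: dem_def separates_def d1_def d2_def)
    qed
  qed
  then obtain fy where fy: "\<forall>e\<in>E. \<bar>fy e\<bar> \<le> int (c e)" "\<forall>v\<in>V. exc E ends fy v = b2 v" by blast
  have "\<forall>v\<in>V. exc E ends (\<lambda>e. fx e + fy e) v = (if v = s1 then int k1 else if v = t1 then - int k1 else 0)"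
    using fx(2) fy(2) tV(5) unfolding exc_add b1_def b2_def d1k by auto
  from decomp[OF G tV(1,2,5) this] obtain P1 where P1: "length P1 = k1"
    "\<forall>p\<in>set P1. is_path V E ends s1 t1 p" "\<forall>e\<in>E. int (load P1 e) \<le> \<bar>fx e + fy e\<bar>" by blast
  have "\<forall>v\<in>V. exc E ends (\<lambda>e. fx e - fy e) v = (if v = s2 then int k2 else if v = t2 then - int k2 else 0)"
    using fx(2) fy(2) tV(6) unfolding exc_diff b1_def b2_def d2k by auto
  from decomp[OF G tV(3,4,6) this] obtain P2 where P2: "length P2 = k2"
    "\<forall>p\<in>set P2. is_path V E ends s2 t2 p" "\<forall>e\<in>E. int (load P2 e) \<le> \<bar>fx e - fy e\<bar>" by blast
  have "path_families V E ends s1 t1 s2 t2 k1 k2 P1 P2"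
    using P1 P2 by (simp add: path_families_def)
  moreover have "\<forall>e\<in>E. real (load (P1 @ P2) e) \<le> 2 * of_int \<lfloor>real (u e) / x\<rfloor>"
  proof
    fix e assume eE: "e \<in> E"
    have "int (load (P1 @ P2) e) \<le> \<bar>fx e + fy e\<bar> + \<bar>fx e - fy e\<bar>"
      using P1(3) P2(3) eE unfolding load_append by force
    also have "\<dots> \<le> 2 * int (c e)" using fx(1) fy(1) eE by (auto simp: abs_if)
    finally have "int (load (P1 @ P2) e) \<le> 2 * \<lfloor>real (u e) / x\<rfloor>" unfolding cint .
    then have "real_of_int (int (load (P1 @ P2) e)) \<le> real_of_int (2 * \<lfloor>real (u e) / x\<rfloor>)"
      by (simp only: of_int_le_iff)
    then show "real (load (P1 @ P2) e) \<le> 2 * of_int \<lfloor>real (u e) / x\<rfloor>" by simp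
  qed
  ultimately show ?thesis by blast
qed




theorem mainTheorem3:
  fixes V :: "'v set" and E :: "'e set" and ends :: "'e \<Rightarrow> 'v \<times> 'v"
    and u :: "'e \<Rightarrow> nat" and s1 t1 s2 t2 :: 'v and k1 k2 :: nat
  assumes G: "graph V E ends"
    and terminals: "s1 \<in> V" "t1 \<in> V" "s2 \<in> V" "t2 \<in> V" "s1 \<noteq> t1" "s2 \<noteq> t2"
    and conn1: "\<exists>p. is_path V E ends s1 t1 p"
    and conn2: "\<exists>p. is_path V E ends s2 t2 p"
    and k: "even k1" "even k2" "k1 > 0" "k2 > 0"
    and tight: "2 * cap_graph V E ends u s1 t1 s2 t2 k1 k2
                  = cap_graph V E ends u s1 t1 s2 t2 (k1 div 2) (k2 div 2)"
  shows "let x = cap_graph V E ends u s1 t1 s2 t2 (k1 div 2) (k2 div 2) in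
           x / 2 \<in> tu_values V E ends u s1 t1 s2 t2 k1 k2 \<and>
           (\<forall>f\<in>tu_values V E ends u s1 t1 s2 t2 k1 k2. f \<le> x / 2) \<and>
           (x > 0 \<longrightarrow>
              (\<exists>P1 P2. path_families V E ends s1 t1 s2 t2 k1 k2 P1 P2 \<and>
                 (\<forall>e\<in>E. real (load (P1 @ P2) e) \<le> 2 * of_int \<lfloor>real (u e) / x\<rfloor>)) \<and>
              (\<forall>P1 P2. path_families V E ends s1 t1 s2 t2 k1 k2 P1 P2 \<and>
                 (\<forall>e\<in>E. real (load (P1 @ P2) e) \<le> 2 * of_int \<lfloor>real (u e) / x\<rfloor>)
                 \<longrightarrow> (\<forall>e\<in>E. (x / 2) * real (load (P1 @ P2) e) \<le> real (u e))))"
proof -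
  have finE: "finite E" using G by (simp add: graph_def)
  have finC: "finite (cut_edges E ends S)" for S using finE by (simp add: cut_edges_def)
  define x where "x = cap_graph V E ends u s1 t1 s2 t2 (k1 div 2) (k2 div 2)"
  have a: "k1 div 2 > 0" using k by auto
  obtain S0 where S0: "S0 \<subseteq> V" "dem s1 t1 s2 t2 (k1 div 2) (k2 div 2) S0 \<noteq> 0"
      "x = cap_cut E ends u s1 t1 s2 t2 (k1 div 2) (k2 div 2) S0"
    using cg_facts(1)[OF G terminals(1) terminals(5) a, of s2 t2 "k2 div 2" u] unfolding x_def by blast
  have xnn: "0 \<le> x" using capcut_nonneg[OF G conn1 conn2 S0(2)] S0(3) by simp
  have xle: "x \<le> cap_cut E ends u s1 t1 s2 t2 (k1 div 2) (k2 div 2) S"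
    if "S \<subseteq> V" "dem s1 t1 s2 t2 (k1 div 2) (k2 div 2) S \<noteq> 0" for S
    using cg_facts(2)[OF G terminals(1) terminals(5) a that] unfolding x_def .
  have upper: "\<forall>f\<in>tu_values V E ends u s1 t1 s2 t2 k1 k2. f \<le> x / 2"
  proof
    fix f assume "f \<in> tu_values V E ends u s1 t1 s2 t2 k1 k2"
    then obtain P1 P2 where f: "f \<ge> 0" "path_families V E ends s1 t1 s2 t2 k1 k2 P1 P2"
      "\<forall>e\<in>E. f * real (load (P1 @ P2) e) \<le> real (u e)"
      unfolding tu_values_def by blast
    obtain S1 where S1: "S1 \<subseteq> V" "dem s1 t1 s2 t2 k1 k2 S1 \<noteq> 0"
      "cap_graph V E ends u s1 t1 s2 t2 k1 k2 = cap_cut E ends u s1 t1 s2 t2 k1 k2 S1"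
      using cg_facts(1)[OF G terminals(1) terminals(5) k(3), of s2 t2 k2 u] by blast
    have "f \<in> capset (cut_edges E ends S1) u (dem s1 t1 s2 t2 k1 k2 S1)"
      unfolding capset_def
    proof (intro CollectI conjI exI[of _ "load (P1 @ P2)"] ballI)
      show "0 \<le> f" by fact
      fix e assume "e \<in> cut_edges E ends S1"
      then have "e \<in> E" by (simp add: cut_edges_def)
      then show "real (load (P1 @ P2) e) * f \<le> real (u e)" using f(3) by (simp add: mult.commute)
    next
      show "dem s1 t1 s2 t2 k1 k2 S1 \<le> (\<Sum>e\<in>cut_edges E ends S1. load (P1 @ P2) e)"
        using dem_le_load[OF finE f(2)] .
    qed
    then have "f \<le> cap_cut E ends u s1 t1 s2 t2 k1 k2 S1"
      unfolding cap_cut_capset using capset_bdd[OF finC] S1(2) by (intro cSup_upper) auto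
    then show "f \<le> x / 2" using S1(3) tight unfolding x_def by simp
  qed
  have hu: "\<exists>P1 P2. path_families V E ends s1 t1 s2 t2 k1 k2 P1 P2 \<and>
                 (\<forall>e\<in>E. real (load (P1 @ P2) e) \<le> 2 * of_int \<lfloor>real (u e) / x\<rfloor>)"
    if xpos: "x > 0"
  proof (rule hu_paths[OF G terminals k(1,2) xpos])
    fix S assume S: "S \<subseteq> V"
    show "dem s1 t1 s2 t2 (k1 div 2) (k2 div 2) S \<le> (\<Sum>e\<in>cut_edges E ends S. nat \<lfloor>real (u e) / x\<rfloor>)"
    proof (cases "dem s1 t1 s2 t2 (k1 div 2) (k2 div 2) S = 0")
      case True then show ?thesis by simp
    next
      case False
      show ?thesis
        using cap_ge[OF finC cut_ne[OF conn1 conn2 False] _ xpos] xle[OF S False] False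
        unfolding cap_cut_capset by simp
    qed
  qed
  have last: "\<forall>P1 P2. path_families V E ends s1 t1 s2 t2 k1 k2 P1 P2 \<and>
                 (\<forall>e\<in>E. real (load (P1 @ P2) e) \<le> 2 * of_int \<lfloor>real (u e) / x\<rfloor>)
                 \<longrightarrow> (\<forall>e\<in>E. (x / 2) * real (load (P1 @ P2) e) \<le> real (u e))"
    if xpos: "x > 0"
  proof (intro allI impI ballI)
    fix P1 P2 e
    assume h: "path_families V E ends s1 t1 s2 t2 k1 k2 P1 P2 \<and>
                 (\<forall>e\<in>E. real (load (P1 @ P2) e) \<le> 2 * of_int \<lfloor>real (u e) / x\<rfloor>)"
      and eE: "e \<in> E"
    have "(x / 2) * real (load (P1 @ P2) e) \<le> (x / 2) * (2 * of_int \<lfloor>real (u e) / x\<rfloor>)"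
      using h eE xpos by (intro mult_left_mono) auto
    also have "\<dots> = x * of_int \<lfloor>real (u e) / x\<rfloor>" by simp
    also have "\<dots> \<le> x * (real (u e) / x)" using xpos by (intro mult_left_mono) auto
    also have "\<dots> = real (u e)" using xpos by simp
    finally show "(x / 2) * real (load (P1 @ P2) e) \<le> real (u e)" .
  qed
  have mem: "x / 2 \<in> tu_values V E ends u s1 t1 s2 t2 k1 k2"
  proof (cases "x > 0")
    case True
    from hu[OF True] obtain P1 P2 where P: "path_families V E ends s1 t1 s2 t2 k1 k2 P1 P2"
      "\<forall>e\<in>E. real (load (P1 @ P2) e) \<le> 2 * of_int \<lfloor>real (u e) / x\<rfloor>" by blast
    have "\<forall>e\<in>E. (x / 2) * real (load (P1 @ P2) e) \<le> real (u e)"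
      using last[OF True] P by blast
    then show ?thesis using P(1) xnn unfolding tu_values_def by auto
  next
    case False
    then have x0: "x = 0" using xnn by simp
    obtain p1 p2 where p: "is_path V E ends s1 t1 p1" "is_path V E ends s2 t2 p2"
      using conn1 conn2 by blast
    have "path_families V E ends s1 t1 s2 t2 k1 k2 (replicate k1 p1) (replicate k2 p2)"
      using p by (simp add: path_families_def)
    then show ?thesis unfolding tu_values_def x0 by auto
  qed
  show ?thesis unfolding Let_def x_def[symmetric] using mem upper hu last by blast
qed


end
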